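(* Let $a_2,a_3$ be integers with $1<a_2<a_3$, $A=\{1,a_2,a_3\}$, and let $SG(A,n,p)$ be a stride generator. Then the smallest break $y$ of $SG(A,n,p)$ satisfies $y=\mathrm{str}(T_p)-1$ or $y=\mathrm{end}(T_p)$ for some thread $T_p$ of order $p$.
   Context: For integers $n$ and $i\ge 0$, an integer $x$ has an $n$-generation of order $i$ if there are integers $c_1,c_2\ge 0$ with $x+ia_3=c_2a_2+c_1$ and $c_1+c_2\le n+i$. For integers $n$ and $p\ge0$, $SG(A,n,p)$ is a stride generator if: (A) every integer $0\le x<a_3$ has an $n$-generation of some order $\le p$; (B) at least one integer $0\le x<a_3$ has no $n$-generation of order $<p$; (C) at least one integer $0\le y<a_3$ has no $(n-1)$-generation of any order $\le p+1$. Any such $y$ is called a break. Threads: for integers $e\ge 0$, $i\ge0$ with $n+i-e\ge 0$, the thread $T(e,i)$ is the integer interval $[c,d]$ with $\mathrm{str}=c=ea_2-ia_3$ and $\mathrm{end}=d=c+(n+i)-e$; its order is $i$. Only such intervals meeting $[0,a_3)$ are regarded as threads. *)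

theory Defs
  imports Main
begin

definition has_gen :: "int \<Rightarrow> int \<Rightarrow> int \<Rightarrow> nat \<Rightarrow> int \<Rightarrow> bool" where
  "has_gen a2 a3 n i x \<longleftrightarrow>
     (\<exists>c1 c2::int. c1 \<ge> 0 \<and> c2 \<ge> 0 \<and> x + int i * a3 = c2 * a2 + c1 \<and> c1 + c2 \<le> n + int i)"

definition stride_generator :: "int \<Rightarrow> int \<Rightarrow> int \<Rightarrow> nat \<Rightarrow> bool" where
  "stride_generator a2 a3 n p \<longleftrightarrow>
     (\<forall>x. 0 \<le> x \<and> x < a3 \<longrightarrow> (\<exists>i\<le>p. has_gen a2 a3 n i x)) \<and>
     (\<exists>x. 0 \<le> x \<and> x < a3 \<and> (\<forall>i<p. \<not> has_gen a2 a3 n i x)) \<and>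
     (\<exists>y. 0 \<le> y \<and> y < a3 \<and> (\<forall>i\<le>p+1. \<not> has_gen a2 a3 (n-1) i y))"

definition is_break :: "int \<Rightarrow> int \<Rightarrow> int \<Rightarrow> nat \<Rightarrow> int \<Rightarrow> bool" where
  "is_break a2 a3 n p y \<longleftrightarrow>
     0 \<le> y \<and> y < a3 \<and> (\<forall>i\<le>p+1. \<not> has_gen a2 a3 (n-1) i y)"

definition thread_str :: "int \<Rightarrow> int \<Rightarrow> nat \<Rightarrow> nat \<Rightarrow> int" where
  "thread_str a2 a3 e i = int e * a2 - int i * a3"

definition thread_end :: "int \<Rightarrow> int \<Rightarrow> int \<Rightarrow> nat \<Rightarrow> nat \<Rightarrow> int" where
  "thread_end a2 a3 n e i = thread_str a2 a3 e i + (n + int i) - int e"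

definition is_thread :: "int \<Rightarrow> int \<Rightarrow> int \<Rightarrow> nat \<Rightarrow> nat \<Rightarrow> bool" where
  "is_thread a2 a3 n e i \<longleftrightarrow>
     n + int i - int e \<ge> 0 \<and> thread_end a2 a3 n e i \<ge> 0 \<and> thread_str a2 a3 e i < a3"

end

theory Submission imports Defs begin

definition hh :: "int \<Rightarrow> int \<Rightarrow> int" where "hh a W = W div a + W mod a"

lemma hh_shift: "a > 0 \<Longrightarrow> hh a (W + g * a) = hh a W + g"
  unfolding hh_def by simp

lemma hh_le_self: assumes "a > 0" "t \<ge> 0" shows "hh a t \<le> t"
proof -
  have e: "t div a * a + t mod a = t" by simp
  have "t div a \<ge> 0" using assms by (simp add: pos_imp_zdiv_nonneg_iff)
  then have "t div a \<le> t div a * a" using assms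
    by (metis mult.commute mult_le_cancel_left1 zero_less_iff_neq_zero linorder_not_le mult.right_neutral zmult_zless_mono2 order_less_imp_le int_one_le_iff_zero_less)
  then show ?thesis unfolding hh_def using e by linarith
qed

lemma hh_add: assumes "a > 0" "c \<ge> 0" shows "hh a (W + c) \<le> hh a W + c"
proof -
  have "W + c = (W mod a + c) + (W div a) * a" by simp
  then have "hh a (W + c) = hh a (W mod a + c) + W div a" using hh_shift[OF assms(1)] by metis
  also have "\<dots> \<le> (W mod a + c) + W div a" using hh_le_self[OF assms(1), of "W mod a + c"] assms by simp
  finally show ?thesis unfolding hh_def by simp
qed

lemma hh_small: "0 \<le> W \<Longrightarrow> W < a \<Longrightarrow> hh a W = W"
  unfolding hh_def by simp

lemma hh_succ: assumes "a > 1" "(W+1) mod a \<noteq> 0" shows "hh a (W+1) = hh a W + 1"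
proof -
  have a0: "a > 0" using assms by simp
  have r: "W mod a + 1 < a"
  proof (rule ccontr)
    assume "\<not> W mod a + 1 < a"
    then have "W mod a + 1 = a" using pos_mod_bound[OF a0, of W] by linarith
    then have "W + 1 = (W div a + 1) * a" by (metis add.commute add.left_commute div_mod_decomp_int distrib_right mult_1)
    then show False using assms(2) by simp
  qed
  have "W + 1 = (W mod a + 1) + (W div a) * a" by simp
  then have "hh a (W + 1) = hh a (W mod a + 1) + W div a" using hh_shift[OF a0] by metis
  also have "\<dots> = W mod a + 1 + W div a" using hh_small[of "W mod a + 1" a] r a0 by simp
  finally show ?thesis unfolding hh_def by simp
qed

lemma gen_iff:
  assumes "1 < a2" "a2 < a3" "0 \<le> x"
  shows "has_gen a2 a3 n i x \<longleftrightarrow> hh a2 (x + int i * (a3 - a2)) \<le> n"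
proof
  assume "has_gen a2 a3 n i x"
  then obtain c1 c2 where c: "c1 \<ge> 0" "c2 \<ge> 0" "x + int i * a3 = c2 * a2 + c1" "c1 + c2 \<le> n + int i"
    unfolding has_gen_def by blast
  have "x + int i * (a3 - a2) = c1 + (c2 - int i) * a2" using c(3) by (simp add: algebra_simps)
  then have "hh a2 (x + int i * (a3 - a2)) = hh a2 c1 + (c2 - int i)" using hh_shift[of a2 c1 "c2 - int i"] assms by simp
  also have "\<dots> \<le> c1 + (c2 - int i)" using hh_le_self[of a2 c1] c assms by simp
  finally show "hh a2 (x + int i * (a3 - a2)) \<le> n" using c by simp
next
  assume h: "hh a2 (x + int i * (a3 - a2)) \<le> n"
  define W where "W = x + int i * (a3 - a2)"
  have W0: "W \<ge> 0" using assms by (simp add: W_def)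
  have a0: "a2 > 0" using assms by simp
  show "has_gen a2 a3 n i x" unfolding has_gen_def
  proof (intro exI conjI)
    show "W mod a2 \<ge> 0" using a0 by simp
    show "W div a2 + int i \<ge> 0" using W0 a0 by (simp add: pos_imp_zdiv_nonneg_iff)
    have "W div a2 * a2 + W mod a2 = W" by simp
    then show "x + int i * a3 = (W div a2 + int i) * a2 + W mod a2" unfolding W_def by (simp add: algebra_simps)
    show "W mod a2 + (W div a2 + int i) \<le> n + int i" using h unfolding hh_def W_def by simp
  qed
qed

theorem lemma9:
  fixes a2 a3 n :: int and p :: nat and y :: int
  assumes "1 < a2" and "a2 < a3"
    and "stride_generator a2 a3 n p"
    and "is_break a2 a3 n p y"
    and "\<forall>y'. is_break a2 a3 n p y' \<longrightarrow> y \<le> y'"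
  shows "\<exists>e::nat. is_thread a2 a3 n e p \<and>
           (y = thread_str a2 a3 e p - 1 \<or> y = thread_end a2 a3 n e p)"
proof -
  define d where "d = a3 - a2"
  have d0: "d > 0" using assms by (simp add: d_def)
  have a20: "a2 > 0" using assms by simp
  define H where "H x i = hh a2 (x + int i * d)" for x :: int and i :: nat
  have gen: "\<And>m i x. 0 \<le> x \<Longrightarrow> has_gen a2 a3 m i x \<longleftrightarrow> H x i \<le> m"
    using gen_iff assms(1,2) unfolding H_def d_def by blast
  have A: "\<And>x. 0 \<le> x \<Longrightarrow> x < a3 \<Longrightarrow> \<exists>i\<le>p. H x i \<le> n"
    using assms(3) gen unfolding stride_generator_def by blast
  have B: "\<exists>x. 0 \<le> x \<and> x < a3 \<and> (\<forall>i<p. n < H x i)"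
  proof -
    obtain x where "0 \<le> x" "x < a3" "\<forall>i<p. \<not> has_gen a2 a3 n i x"
      using assms(3) unfolding stride_generator_def by blast
    then show ?thesis using gen by (metis not_le)
  qed
  have y0: "0 \<le> y" "y < a3" using assms(4) unfolding is_break_def by auto
  have yb: "\<And>i. i \<le> p+1 \<Longrightarrow> n \<le> H y i"
  proof -
    fix i assume "i \<le> p+1"
    then have "\<not> has_gen a2 a3 (n-1) i y" using assms(4) unfolding is_break_def by auto
    then show "n \<le> H y i" using gen[OF y0(1)] by auto
  qed
  have minb: "\<And>y'. 0 \<le> y' \<Longrightarrow> y' < a3 \<Longrightarrow> (\<forall>i\<le>p+1. n \<le> H y' i) \<Longrightarrow> y \<le> y'"
  proof -
    fix y' assume h: "0 \<le> y'" "y' < a3" "\<forall>i\<le>p+1. n \<le> H y' i"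
    have "is_break a2 a3 n p y'" unfolding is_break_def using h gen[OF h(1)] by force
    then show "y \<le> y'" using assms(5) by blast
  qed
  have Hsh: "\<And>x i. H (x + a2) i = H x i + 1"
  proof -
    fix x i
    have "x + a2 + int i * d = (x + int i * d) + 1 * a2" by simp
    then show "H (x + a2) i = H x i + 1" unfolding H_def using hh_shift[OF a20] by metis
  qed
  have HSuc: "\<And>x i. H (x - d) (Suc i) = H x i"
    unfolding H_def by (simp add: algebra_simps)
  show ?thesis
  proof (cases "H y p \<le> n")
    case True
    then have Hyp: "H y p = n" using yb[of p] by simp
    define W where "W = y + int p * d"
    have W0: "W \<ge> 0" using y0 d0 by (simp add: W_def)
    have Wd0: "W div a2 \<ge> 0" using W0 a20 by (simp add: pos_imp_zdiv_nonneg_iff)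
    have hW: "W div a2 + W mod a2 = n" using Hyp unfolding H_def hh_def W_def by simp
    have eW: "W div a2 * a2 + W mod a2 = W" by simp
    have m0: "W mod a2 \<ge> 0" using a20 by simp
    define e where "e = nat (W div a2) + p"
    have ie: "int e = W div a2 + int p" using Wd0 by (simp add: e_def)
    have str: "thread_str a2 a3 e p = y - W mod a2"
      unfolding thread_str_def ie using eW unfolding W_def d_def by (simp add: algebra_simps)
    have en: "thread_end a2 a3 n e p = y"
      unfolding thread_end_def str ie using hW by simp
    show ?thesis
    proof (intro exI conjI)
      show "is_thread a2 a3 n e p" unfolding is_thread_def en str ie using hW m0 y0 by simp
      show "y = thread_str a2 a3 e p - 1 \<or> y = thread_end a2 a3 n e p" using en by simp
    qed
  next
    case False
    then have Hyp: "n < H y p" by simp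
    obtain i1 where i1: "i1 \<le> p" "H y i1 \<le> n" using A y0 by blast
    have i1p: "i1 < p" using i1 False le_neq_implies_less by blast
    have Hyi1: "H y i1 = n" using i1 yb[of i1] by simp
    have yd: "y \<ge> d"
    proof (rule ccontr)
      assume "\<not> y \<ge> d"
      then have "0 \<le> y + a2" "y + a2 < a3" using y0 a20 by (auto simp: d_def)
      then obtain i where "i \<le> p" "H (y + a2) i \<le> n" using A by blast
      then show False using Hsh[of y i] yb[of i] by simp
    qed
    define v where "v = y - d"
    have v0: "0 \<le> v" "v < a2" using yd y0 by (auto simp: v_def d_def)
    have vn: "v \<le> n - 1"
    proof (rule ccontr)
      assume nv: "\<not> v \<le> n - 1"
      have Hv0: "H v 0 = v" unfolding H_def using hh_small[OF v0] by simp
      have "\<forall>i\<le>p+1. n \<le> H v i"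
      proof (intro allI impI)
        fix i assume "i \<le> p+1"
        show "n \<le> H v i"
        proof (cases i)
          case 0 then show ?thesis using Hv0 nv by simp
        next
          case (Suc k)
          then have "H v i = H y k" using HSuc[of y k] by (simp add: v_def)
          then show ?thesis using yb[of k] \<open>i \<le> p+1\<close> Suc by simp
        qed
      qed
      then have "y \<le> v" using minb v0 assms(2) by simp
      then show False using d0 by (simp add: v_def)
    qed
    define S where "S = {x. 0 \<le> x \<and> x < a3 \<and> (\<forall>i<p. n < H x i)}"
    have finS: "finite S" by (rule finite_subset[of _ "{0..<a3}"]) (auto simp: S_def)
    have neS: "S \<noteq> {}" using B unfolding S_def by blast
    define x0 where "x0 = Max S"
    have x0S: "x0 \<in> S" using finS neS by (simp add: x0_def)
    have x0max: "\<And>x. x \<in> S \<Longrightarrow> x \<le> x0" using finS by (simp add: x0_def)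
    have x0a: "0 \<le> x0" "x0 < a3" "\<And>i. i < p \<Longrightarrow> n < H x0 i" using x0S by (auto simp: S_def)
    have x0d: "x0 \<ge> d"
    proof (rule ccontr)
      assume "\<not> x0 \<ge> d"
      then have "0 \<le> x0 + a2" "x0 + a2 < a3" using x0a a20 by (auto simp: d_def)
      moreover have "\<forall>i<p. n < H (x0 + a2) i" using x0a(3) Hsh by force
      ultimately have "x0 + a2 \<in> S" unfolding S_def by blast
      then show False using x0max[of "x0 + a2"] a20 by simp
    qed
    have Hx0p: "H x0 p \<le> n"
    proof -
      obtain i where "i \<le> p" "H x0 i \<le> n" using A x0a by blast
      then show ?thesis using x0a(3)[of i] by (cases "i < p") (auto simp: not_less)
    qed
    define u where "u = x0 - d"
    have u0: "0 \<le> u" "u < a2" using x0d x0a by (auto simp: u_def d_def)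
    have Hu: "\<And>i. 1 \<le> i \<Longrightarrow> i \<le> p \<Longrightarrow> n < H u i"
    proof -
      fix i :: nat assume "1 \<le> i" "i \<le> p"
      then obtain k where k: "i = Suc k" "k < p" by (cases i) auto
      then show "n < H u i" using HSuc[of x0 k] x0a(3)[of k] by (simp add: u_def)
    qed
    have Hup: "H u (Suc p) \<le> n" using HSuc[of x0 p] Hx0p by (simp add: u_def)
    have un: "u \<le> n"
    proof -
      obtain i where i: "i \<le> p" "H u i \<le> n" using A u0 assms(2) by force
      have "i = 0"
      proof (rule ccontr)
        assume "i \<noteq> 0" then show False using Hu[of i] i by simp
      qed
      then show ?thesis using i hh_small[OF u0] unfolding H_def by simp
    qed
    have Hvi0: "H v (Suc i1) = n" using HSuc[of y i1] Hyi1 by (simp add: v_def)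
    show ?thesis
    proof (cases "u \<le> v")
      case True
      define b0 where "b0 = (v + int (Suc i1) * d) div a2"
      define r0 where "r0 = (v + int (Suc i1) * d) mod a2"
      have br: "b0 + r0 = n" using Hvi0 unfolding H_def hh_def b0_def r0_def by simp
      have bre: "v + int (Suc i1) * d = r0 + b0 * a2" unfolding b0_def r0_def by simp
      have r0lt: "r0 < v - u"
      proof (rule ccontr)
        assume "\<not> r0 < v - u"
        have "u + int (Suc i1) * d = (r0 - (v - u)) + b0 * a2" using bre by simp
        then have "H u (Suc i1) = hh a2 (r0 - (v - u)) + b0" unfolding H_def using hh_shift[OF a20] by metis
        also have "\<dots> \<le> r0 - (v - u) + b0" using hh_le_self[OF a20, of "r0 - (v - u)"] \<open>\<not> r0 < v - u\<close> by simp
        finally show False using Hu[of "Suc i1"] i1p br True by simp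
      qed
      define k where "k = p - i1"
      have k1: "1 \<le> k" "k \<le> p" using i1p by (auto simp: k_def)
      define Z where "Z = u + int k * d - (v - r0)"
      have "u + int (Suc p) * d = Z + b0 * a2"
      proof -
        have "int (Suc p) = int k + int (Suc i1)" using i1p by (simp add: k_def)
        then show ?thesis using bre unfolding Z_def by (simp add: algebra_simps)
      qed
      then have "H u (Suc p) = hh a2 Z + b0" unfolding H_def using hh_shift[OF a20] by metis
      then have hZ: "hh a2 Z \<le> r0" using Hup br by simp
      have "u + int k * d = Z + (v - r0)" unfolding Z_def by simp
      then have "H u k \<le> hh a2 Z + (v - r0)" unfolding H_def using hh_add[OF a20, of "v - r0" Z] r0lt True u0 by simp
      then show ?thesis using Hu[OF k1] hZ vn by simp
    next
      case False
      then have uv: "v < u" by simp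
      have y1: "0 \<le> y + 1" "y + 1 < a3" using y0 uv u0 by (auto simp: v_def u_def d_def)
      obtain j' where j': "j' \<le> p" "H (y+1) j' \<le> n" using A[OF y1] by blast
      have modz: "(y + 1 + int j' * d) mod a2 = 0"
      proof (rule ccontr)
        assume "(y + 1 + int j' * d) mod a2 \<noteq> 0"
        moreover have "y + 1 + int j' * d = (y + int j' * d) + 1" by simp
        ultimately have "hh a2 ((y + int j' * d) + 1) = hh a2 (y + int j' * d) + 1"
          using hh_succ[OF assms(1), of "y + int j' * d"] by simp
        moreover have "H (y+1) j' = hh a2 ((y + int j' * d) + 1)" unfolding H_def
          by (rule arg_cong[where f="hh a2"]) simp
        ultimately have "H (y+1) j' = H y j' + 1" unfolding H_def by simp
        then show False using j' yb[of j'] by simp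
      qed
      define W where "W = y + 1 + int j' * d"
      define g where "g = W div a2"
      have Wm: "W mod a2 = 0" using modz unfolding W_def .
      have "W = W div a2 * a2 + W mod a2" by simp
      then have Wg: "W = g * a2" using Wm unfolding g_def by simp
      have "hh a2 W \<le> n" using j'(2) unfolding H_def W_def .
      then have gn: "g \<le> n" using Wm unfolding hh_def g_def by simp
      show ?thesis
      proof (cases "j' = p")
        case True
        have W0: "W \<ge> 0" using y0 d0 by (simp add: W_def)
        have g0: "g \<ge> 0" using W0 a20 by (simp add: g_def pos_imp_zdiv_nonneg_iff)
        define e where "e = nat g + p"
        have ie: "int e = g + int p" using g0 by (simp add: e_def)
        have str: "thread_str a2 a3 e p = y + 1"
          unfolding thread_str_def ie using Wg True unfolding W_def d_def by (simp add: algebra_simps)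
        show ?thesis
        proof (intro exI conjI)
          show "is_thread a2 a3 n e p" unfolding is_thread_def thread_end_def str ie using gn y1 by simp
          show "y = thread_str a2 a3 e p - 1 \<or> y = thread_end a2 a3 n e p" using str by simp
        qed
      next
        case False
        then have j'p: "j' < p" using j' by simp
        have Wv: "W = v + 1 + int (Suc j') * d" unfolding W_def v_def by (simp add: algebra_simps)
        have "u + int (Suc j') * d = (u - v - 1) + g * a2" using Wv Wg by simp
        then have "H u (Suc j') = hh a2 ((u - v - 1) + g * a2)" unfolding H_def by (rule arg_cong)
        then have "H u (Suc j') = hh a2 (u - v - 1) + g" using hh_shift[OF a20] by simp
        also have "\<dots> \<le> (u - v - 1) + g" using hh_le_self[OF a20, of "u - v - 1"] uv by simp
        finally have r1: "n + 1 \<le> u - v - 1 + g" using Hu[of "Suc j'"] j'p by simp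
        define m where "m = p - j'"
        have m1: "1 \<le> m" "m \<le> p" using j'p by (auto simp: m_def)
        define X where "X = u + int m * d - v - 1"
        have "u + int (Suc p) * d = X + g * a2"
        proof -
          have "int (Suc p) = int m + int (Suc j')" using j'p by (simp add: m_def)
          then show ?thesis using Wv Wg unfolding X_def by (simp add: algebra_simps)
        qed
        then have "H u (Suc p) = hh a2 (X + g * a2)" unfolding H_def by (rule arg_cong)
        then have "H u (Suc p) = hh a2 X + g" using hh_shift[OF a20] by simp
        then have hX: "hh a2 X \<le> n - g" using Hup by simp
        have "u + int m * d = X + (v + 1)" unfolding X_def by simp
        then have "H u m \<le> hh a2 X + (v + 1)" unfolding H_def using hh_add[OF a20, of "v + 1" X] v0 by simp
        then have "g \<le> v" using Hu[OF m1] hX by simp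
        then show ?thesis using r1 un by simp
      qed
    qed
  qed
qed

end
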